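(* Let $N\ge1$, $\lambda,\lambda',\mu,a,b\in\mathbb{K}$ with $\mu\neq0$, $a\ne0$, $b\notin\{-1,-2,\ldots\}$. Then the Lie algebras $\mathfrak{g}^{(1)}(N,\lambda,a,b)_+$ and $\mathfrak{g}^{(3)}(N,\lambda',\mu)_+$ are both isomorphic to the semidirect product $\left(V_{-\frac1N}\oplus\cdots\oplus V_{-\frac{N-1}{N}}\right)\rtimes\mathfrak{g}_{FdB}$ (which is just $\mathfrak{g}_{FdB}$ when $N=1$).
   Context: Base field $\mathbb{K}$ of characteristic zero. On $\mathbb{K}[X]$: $\mathfrak{g}^{(1)}(N,\lambda,a,b)$ has $X^i\bullet X^j=i\lambda X^i$ if $j=0$, $\frac{ai}{j/N+b}X^{i+j}$ if $j\ne0$ and $N\mid j$, $0$ otherwise; $\mathfrak{g}^{(3)}(N,\lambda',\mu)$ has $X^i\bullet X^j=i\lambda' X^i$ if $j=0$, $i\mu X^{i+j}$ if $j\neq0$ and $N\mid j$, $0$ otherwise. For such a preLie product, $\mathfrak{g}_+$ denotes $\mathbb{K}[X]_+=\mathrm{Vect}(X^i,i\ge1)$ with Lie bracket $[P,Q]=P\bullet Q-Q\bullet P$. $\mathfrak{g}_{FdB}$ is the Lie algebra with basis $(e_i)_{i\ge1}$ and $[e_i,e_j]=(i-j)e_{i+j}$. For $\alpha\in\mathbb{K}$, $V_\alpha$ is the right $\mathfrak{g}_{FdB}$-module with basis $(f_i)_{i\ge1}$ and $f_i.e_j=(i+\alpha)f_{i+j}$. For a Lie algebra $\mathfrak{g}$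 and a right $\mathfrak{g}$-module $M$, $M\rtimes\mathfrak{g}$ is $M\oplus\mathfrak{g}$ with $M$ abelian, $[m,x]=m.x$ for $m\in M$, $x\in\mathfrak{g}$, and the bracket of $\mathfrak{g}$ on $\mathfrak{g}$. *)

theory Defs
  imports Main
begin

text \<open>Vectors of a K-vector space with a given basis (indexed by a set I) are
  represented as finitely supported coefficient functions I -> K.\<close>

definition fsupp :: "('i \<Rightarrow> 'k::zero) \<Rightarrow> 'i set" where
  "fsupp x = {i. x i \<noteq> 0}"

definition vec :: "'i set \<Rightarrow> ('i \<Rightarrow> 'k::zero) set" where
  "vec I = {x. finite (fsupp x) \<and> fsupp x \<subseteq> I}"

text \<open>Bilinear extension of a product of basis vectors of the form
  b_i * b'_j = c i j * b''_(m i j).\<close>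

definition bil :: "('a \<Rightarrow> 'b \<Rightarrow> 'k::comm_ring) \<Rightarrow> ('a \<Rightarrow> 'b \<Rightarrow> 'c)
    \<Rightarrow> ('a \<Rightarrow> 'k) \<Rightarrow> ('b \<Rightarrow> 'k) \<Rightarrow> ('c \<Rightarrow> 'k)" where
  "bil c m x y = (\<lambda>k. \<Sum>p\<in>{(i, j). i \<in> fsupp x \<and> j \<in> fsupp y \<and> m i j = k}.
        x (fst p) * y (snd p) * c (fst p) (snd p))"

text \<open>The preLie products on K[X] (coefficient sequences of polynomials):
  X^i \<bullet> X^j = c i j X^(i+j).\<close>

definition preLie1 :: "nat \<Rightarrow> 'k::field_char_0 \<Rightarrow> 'k \<Rightarrow> 'k
    \<Rightarrow> (nat \<Rightarrow> 'k) \<Rightarrow> (nat \<Rightarrow> 'k) \<Rightarrow> (nat \<Rightarrow> 'k)" where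
  "preLie1 N lam a b = bil
     (\<lambda>i j. if j = 0 then of_nat i * lam
            else if N dvd j then a * of_nat i / (of_nat j / of_nat N + b)
            else 0)
     (\<lambda>i j. i + j)"

definition preLie3 :: "nat \<Rightarrow> 'k::field_char_0 \<Rightarrow> 'k
    \<Rightarrow> (nat \<Rightarrow> 'k) \<Rightarrow> (nat \<Rightarrow> 'k) \<Rightarrow> (nat \<Rightarrow> 'k)" where
  "preLie3 N lam' mu = bil
     (\<lambda>i j. if j = 0 then of_nat i * lam'
            else if N dvd j then of_nat i * mu
            else 0)
     (\<lambda>i j. i + j)"

definition commutator :: "('v \<Rightarrow> 'v \<Rightarrow> ('i \<Rightarrow> 'k::ab_group_add))
    \<Rightarrow> 'v \<Rightarrow> 'v \<Rightarrow> ('i \<Rightarrow> 'k)" where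
  "commutator pr x y = (\<lambda>k. pr x y k - pr y x k)"

definition gplus_carrier :: "(nat \<Rightarrow> 'k::zero) set" where
  "gplus_carrier = vec {i. 1 \<le> i}"

definition fdb_carrier :: "(nat \<Rightarrow> 'k::zero) set" where
  "fdb_carrier = vec {i. 1 \<le> i}"

definition fdb_bracket :: "(nat \<Rightarrow> 'k::field_char_0) \<Rightarrow> (nat \<Rightarrow> 'k) \<Rightarrow> (nat \<Rightarrow> 'k)" where
  "fdb_bracket = bil (\<lambda>i j. of_nat i - of_nat j) (\<lambda>i j. i + j)"

definition V_act :: "'k::field_char_0 \<Rightarrow> (nat \<Rightarrow> 'k) \<Rightarrow> (nat \<Rightarrow> 'k) \<Rightarrow> (nat \<Rightarrow> 'k)" where
  "V_act alpha = bil (\<lambda>i j. of_nat i + alpha) (\<lambda>i j. i + j)"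

text \<open>Direct sum V_{-1/N} + ... + V_{-(N-1)/N}; component r lives on indices (r, i).\<close>

definition M_carrier :: "nat \<Rightarrow> (nat \<times> nat \<Rightarrow> 'k::zero) set" where
  "M_carrier N = vec ({1..N-1} \<times> {i. 1 \<le> i})"

definition M_act :: "nat \<Rightarrow> (nat \<times> nat \<Rightarrow> 'k::field_char_0) \<Rightarrow> (nat \<Rightarrow> 'k) \<Rightarrow> (nat \<times> nat \<Rightarrow> 'k)" where
  "M_act N x y = (\<lambda>ri. case ri of (r, i) \<Rightarrow> V_act (- (of_nat r / of_nat N)) (\<lambda>l. x (r, l)) y i)"

text \<open>Semidirect product M \<rtimes> g, elements are coefficient functions on the disjoint
  union of the index sets: [m + x, m' + x'] = m.x' - m'.x + [x, x'].\<close>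

definition sd_carrier :: "'a set \<Rightarrow> 'b set \<Rightarrow> ('a + 'b \<Rightarrow> 'k::zero) set" where
  "sd_carrier MI GI = {z. (z \<circ> Inl) \<in> vec MI \<and> (z \<circ> Inr) \<in> vec GI}"

definition sd_bracket :: "(('a \<Rightarrow> 'k::ab_group_add) \<Rightarrow> ('b \<Rightarrow> 'k) \<Rightarrow> ('a \<Rightarrow> 'k))
    \<Rightarrow> (('b \<Rightarrow> 'k) \<Rightarrow> ('b \<Rightarrow> 'k) \<Rightarrow> ('b \<Rightarrow> 'k))
    \<Rightarrow> ('a + 'b \<Rightarrow> 'k) \<Rightarrow> ('a + 'b \<Rightarrow> 'k) \<Rightarrow> ('a + 'b \<Rightarrow> 'k)" where
  "sd_bracket act br z z' = (\<lambda>k. case k of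
       Inl u \<Rightarrow> act (z \<circ> Inl) (z' \<circ> Inr) u - act (z' \<circ> Inl) (z \<circ> Inr) u
     | Inr v \<Rightarrow> br (z \<circ> Inr) (z' \<circ> Inr) v)"

definition target_carrier :: "nat \<Rightarrow> ((nat \<times> nat) + nat \<Rightarrow> 'k::zero) set" where
  "target_carrier N = sd_carrier ({1..N-1} \<times> {i. 1 \<le> i}) {i. 1 \<le> i}"

definition target_bracket :: "nat \<Rightarrow> ((nat \<times> nat) + nat \<Rightarrow> 'k::field_char_0)
    \<Rightarrow> ((nat \<times> nat) + nat \<Rightarrow> 'k) \<Rightarrow> ((nat \<times> nat) + nat \<Rightarrow> 'k)" where
  "target_bracket N = sd_bracket (M_act N) fdb_bracket"

definition lie_iso :: "('i \<Rightarrow> 'k::field) set \<Rightarrow> (('i \<Rightarrow> 'k) \<Rightarrow> ('i \<Rightarrow> 'k) \<Rightarrow> ('i \<Rightarrow> 'k))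
    \<Rightarrow> ('j \<Rightarrow> 'k) set \<Rightarrow> (('j \<Rightarrow> 'k) \<Rightarrow> ('j \<Rightarrow> 'k) \<Rightarrow> ('j \<Rightarrow> 'k))
    \<Rightarrow> (('i \<Rightarrow> 'k) \<Rightarrow> ('j \<Rightarrow> 'k)) \<Rightarrow> bool" where
  "lie_iso A brA B brB phi \<longleftrightarrow>
     bij_betw phi A B \<and>
     (\<forall>x\<in>A. \<forall>y\<in>A. phi (\<lambda>i. x i + y i) = (\<lambda>j. phi x j + phi y j)) \<and>
     (\<forall>c. \<forall>x\<in>A. phi (\<lambda>i. c * x i) = (\<lambda>j. c * phi x j)) \<and>
     (\<forall>x\<in>A. \<forall>y\<in>A. phi (brA x y) = brB (phi x) (phi y))"

definition lie_isomorphic :: "('i \<Rightarrow> 'k::field) set \<Rightarrow> (('i \<Rightarrow> 'k) \<Rightarrow> ('i \<Rightarrow> 'k) \<Rightarrow> ('i \<Rightarrow> 'k))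
    \<Rightarrow> ('j \<Rightarrow> 'k) set \<Rightarrow> (('j \<Rightarrow> 'k) \<Rightarrow> ('j \<Rightarrow> 'k) \<Rightarrow> ('j \<Rightarrow> 'k)) \<Rightarrow> bool" where
  "lie_isomorphic A brA B brB \<longleftrightarrow> (\<exists>phi. lie_iso A brA B brB phi)"

end

theory Submission
  imports Defs
begin

lemma sum_rev_atMost: "(\<Sum>i\<le>n. f (n - i)) = (\<Sum>i\<le>(n::nat). f i)"
  by (rule sum.reindex_bij_witness[where i="\<lambda>i. n - i" and j="\<lambda>i. n - i"]) auto

lemma bil_conv:
  fixes x y :: "nat \<Rightarrow> 'k::comm_ring"
  assumes fx: "finite (fsupp x)" and fy: "finite (fsupp y)"
  shows "bil c (\<lambda>i j. i + j) x y k = (\<Sum>i\<le>k. x i * y (k - i) * c i (k - i))"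
proof -
  let ?P = "{(i, j). i \<in> fsupp x \<and> j \<in> fsupp y \<and> i + j = k}"
  let ?Q = "{i\<in>{..k}. x i \<noteq> 0 \<and> y (k - i) \<noteq> 0}"
  have P: "?P = (\<lambda>i. (i, k - i)) ` ?Q"
    by (auto simp: fsupp_def image_iff)
  have "bil c (\<lambda>i j. i + j) x y k = (\<Sum>p\<in>?P. x (fst p) * y (snd p) * c (fst p) (snd p))"
    by (simp add: bil_def)
  also have "\<dots> = (\<Sum>i\<in>?Q. x i * y (k - i) * c i (k - i))"
    unfolding P by (subst sum.reindex) (auto simp: inj_on_def)
  also have "\<dots> = (\<Sum>i\<le>k. x i * y (k - i) * c i (k - i))"
    by (rule sum.mono_neutral_left) auto
  finally show ?thesis .
qed

lemma sum_multiples: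
  fixes W :: "nat \<Rightarrow> 'a::comm_monoid_add"
  assumes "N \<ge> 1" "n \<le> N * k"
  shows "(\<Sum>i\<le>n. if N dvd i then W i else 0) = (\<Sum>q\<le>k. if N * q \<le> n then W (N * q) else 0)"
proof -
  have "(\<Sum>i\<le>n. if N dvd i then W i else 0) = (\<Sum>i\<in>{i\<in>{..n}. N dvd i}. W i)"
    by (subst sum.inter_filter) auto
  also have "{i\<in>{..n}. N dvd i} = (\<lambda>q. N * q) ` {q\<in>{..k}. N * q \<le> n}"
  proof (rule set_eqI, rule iffI)
    fix i assume "i \<in> {i\<in>{..n}. N dvd i}"
    then obtain q where q: "i = N * q" "i \<le> n" by auto
    with assms have "q \<le> k" by (metis le_trans mult_le_cancel1 not_le le_simps(3) One_nat_def)
    with q show "i \<in> (\<lambda>q. N * q) ` {q\<in>{..k}. N * q \<le> n}" by auto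
  qed auto
  also have "(\<Sum>i\<in>(\<lambda>q. N * q) ` {q\<in>{..k}. N * q \<le> n}. W i) = (\<Sum>q\<in>{q\<in>{..k}. N * q \<le> n}. W (N * q))"
    using assms by (subst sum.reindex) (auto simp: inj_on_def)
  also have "\<dots> = (\<Sum>q\<le>k. if N * q \<le> n then W (N * q) else 0)"
    by (subst sum.inter_filter) auto
  finally show ?thesis .
qed

lemma vec_pos_iff: "x \<in> vec {i::nat. 1 \<le> i} \<longleftrightarrow> finite (fsupp x) \<and> x 0 = 0"
  unfolding vec_def fsupp_def by (auto simp: Suc_le_eq) (metis not_gr0)

lemma fsupp_slice: "finite (fsupp f) \<Longrightarrow> finite (fsupp (\<lambda>l. f (r, l)))"
proof -
  assume "finite (fsupp f)"
  then have "finite (Pair r -` fsupp f)" by (rule finite_vimageI) (simp add: inj_on_def)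
  moreover have "fsupp (\<lambda>l. f (r, l)) = Pair r -` fsupp f" by (auto simp: fsupp_def)
  ultimately show ?thesis by simp
qed

lemma dm_lemma:
  assumes "1 \<le> r" "r < (N::nat)" "1 \<le> i"
  shows "(N*i - r) div N = i - 1" "(N*i - r) mod N = N - r" "N*i - r = (N - r) + N*(i-1)"
proof -
  show e: "N*i - r = (N - r) + N*(i-1)" using assms by (cases i) (auto simp: algebra_simps)
  have lt: "N - r < N" "N \<noteq> 0" using assms by auto
  have "(N - r + N*(i-1)) div N = (i-1) + (N - r) div N" by (rule div_mult_self2) (use lt in simp)
  then show "(N*i - r) div N = i - 1" using lt by (simp only: e div_less)
  have "(N - r + N*(i-1)) mod N = (N - r) mod N" by (rule mod_mult_self2)
  then show "(N*i - r) mod N = N - r" using lt by (simp only: e mod_less)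
qed

definition gphi :: "nat \<Rightarrow> (nat \<Rightarrow> 'k) \<Rightarrow> (nat \<Rightarrow> 'k::field_char_0) \<Rightarrow> ((nat \<times> nat) + nat \<Rightarrow> 'k)" where
  "gphi N g x = (\<lambda>t. case t of Inr q \<Rightarrow> x (N*q) * (of_nat N * g q)
      | Inl (r, i) \<Rightarrow> if 1 \<le> r \<and> r \<le> N - 1 \<and> 1 \<le> i then x (N*i - r) else 0)"

definition gpsi :: "nat \<Rightarrow> (nat \<Rightarrow> 'k) \<Rightarrow> ((nat \<times> nat) + nat \<Rightarrow> 'k::field_char_0) \<Rightarrow> (nat \<Rightarrow> 'k)" where
  "gpsi N g z = (\<lambda>n. if N dvd n then z (Inr (n div N)) / (of_nat N * g (n div N))
      else z (Inl (N - n mod N, n div N + 1)))"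

lemma target_iff: "z \<in> target_carrier N \<longleftrightarrow>
   finite (fsupp (z \<circ> Inl)) \<and> finite (fsupp (z \<circ> Inr)) \<and> z (Inr 0) = 0 \<and>
   (\<forall>r i. \<not> (1 \<le> r \<and> r \<le> N - 1 \<and> 1 \<le> i) \<longrightarrow> z (Inl (r, i)) = 0)"
  unfolding target_carrier_def sd_carrier_def vec_def fsupp_def
  by (auto simp: subset_iff) (metis not_gr0 One_nat_def Suc_leI)+

lemma comm_conv:
  fixes x y :: "nat \<Rightarrow> 'k::comm_ring"
  assumes fx: "finite (fsupp x)" and fy: "finite (fsupp y)"
  shows "commutator (bil c (\<lambda>i j. i + j)) x y n = (\<Sum>i\<le>n. x i * y (n - i) * (c i (n - i) - c (n - i) i))"
proof -
  have "bil c (\<lambda>i j. i + j) y x n = (\<Sum>i\<le>n. y i * x (n - i) * c i (n - i))"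
    by (rule bil_conv[OF fy fx])
  also have "\<dots> = (\<Sum>i\<le>n. y (n - i) * x (n - (n - i)) * c (n - i) (n - (n - i)))"
    by (rule sum_rev_atMost[symmetric])
  also have "\<dots> = (\<Sum>i\<le>n. x i * y (n - i) * c (n - i) i)"
    by (rule sum.cong) (auto simp: algebra_simps)
  finally have e: "bil c (\<lambda>i j. i + j) y x n = \<dots>" .
  show ?thesis unfolding commutator_def bil_conv[OF fx fy] e
    by (simp add: sum_subtractf[symmetric] algebra_simps)
qed

lemma tb_inr:
  assumes "finite (fsupp (z \<circ> Inr))" "finite (fsupp (z' \<circ> Inr))"
  shows "target_bracket N z z' (Inr p) = (\<Sum>q\<le>p. z (Inr q) * z' (Inr (p - q)) * (of_nat q - of_nat (p - q)))"
  unfolding target_bracket_def sd_bracket_def fdb_bracket_def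
  using bil_conv[OF assms, of "\<lambda>i j. of_nat i - of_nat j" p] by simp

lemma tb_inl:
  assumes "finite (fsupp (z \<circ> Inl))" "finite (fsupp (z' \<circ> Inl))"
    "finite (fsupp (z \<circ> Inr))" "finite (fsupp (z' \<circ> Inr))"
  shows "target_bracket N z z' (Inl (r, k)) =
     (\<Sum>i\<le>k. z (Inl (r, i)) * z' (Inr (k - i)) * (of_nat i + - (of_nat r / of_nat N)))
   - (\<Sum>i\<le>k. z' (Inl (r, i)) * z (Inr (k - i)) * (of_nat i + - (of_nat r / of_nat N)))"
proof -
  have s1: "finite (fsupp (\<lambda>l. (z \<circ> Inl) (r, l)))" by (rule fsupp_slice[OF assms(1)])
  have s2: "finite (fsupp (\<lambda>l. (z' \<circ> Inl) (r, l)))" by (rule fsupp_slice[OF assms(2)])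
  show ?thesis
    unfolding target_bracket_def sd_bracket_def M_act_def V_act_def
    using bil_conv[OF s1 assms(4), of "\<lambda>i j. of_nat i + - (of_nat r / of_nat N)" k]
      bil_conv[OF s2 assms(3), of "\<lambda>i j. of_nat i + - (of_nat r / of_nat N)" k]
    by simp
qed

context
  fixes N :: nat and g :: "nat \<Rightarrow> 'k::field_char_0"
  assumes N: "N \<ge> 1" and gnz: "\<And>q. q \<ge> 1 \<Longrightarrow> g q \<noteq> 0"
begin

lemma phi_in: assumes "x \<in> gplus_carrier" shows "gphi N g x \<in> target_carrier N"
proof -
  from assms have fx: "finite (fsupp x)" and x0: "x 0 = 0"
    unfolding gplus_carrier_def vec_pos_iff by auto
  have "fsupp (gphi N g x \<circ> Inr) \<subseteq> (\<lambda>n. n div N) ` fsupp x"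
  proof
    fix q assume "q \<in> fsupp (gphi N g x \<circ> Inr)"
    then have "N*q \<in> fsupp x" by (auto simp: fsupp_def gphi_def)
    then show "q \<in> (\<lambda>n. n div N) ` fsupp x" using N by (auto intro!: image_eqI[where x="N*q"])
  qed
  then have f1: "finite (fsupp (gphi N g x \<circ> Inr))" using fx finite_surj by blast
  have "fsupp (gphi N g x \<circ> Inl) \<subseteq> (\<lambda>n. (N - n mod N, n div N + 1)) ` fsupp x"
  proof
    fix ri assume a: "ri \<in> fsupp (gphi N g x \<circ> Inl)"
    obtain r i where ri: "ri = (r, i)" by force
    from a have g: "1 \<le> r" "r \<le> N - 1" "1 \<le> i" and nz: "x (N*i - r) \<noteq> 0"
      by (auto simp: fsupp_def gphi_def ri split: if_splits)
    have "r < N" using g N by linarith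
    from dm_lemma[OF g(1) this g(3)] g have "(N - (N*i - r) mod N, (N*i - r) div N + 1) = (r, i)"
      using \<open>r < N\<close> by auto
    then show "ri \<in> (\<lambda>n. (N - n mod N, n div N + 1)) ` fsupp x"
      using nz ri by (auto simp: fsupp_def intro!: image_eqI[where x="N*i - r"])
  qed
  then have f2: "finite (fsupp (gphi N g x \<circ> Inl))" using fx finite_surj by blast
  show ?thesis unfolding target_iff using f1 f2 x0 by (auto simp: gphi_def)
qed

lemma nd_lemma:
  assumes "\<not> N dvd n"
  shows "1 \<le> N - n mod N" "N - n mod N \<le> N - 1" "N*(n div N + 1) - (N - n mod N) = n"
proof -
  have m1: "n mod N < N" using N by simp
  have m2: "n mod N \<noteq> 0" using assms by (simp add: dvd_eq_mod_eq_0)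
  have e: "N * (n div N) + n mod N = n" by (rule mult_div_mod_eq)
  show "1 \<le> N - n mod N" "N - n mod N \<le> N - 1" using m1 m2 by auto
  have "N*(n div N + 1) = N * (n div N) + N" by (simp add: algebra_simps)
  then show "N*(n div N + 1) - (N - n mod N) = n" using e m1 by linarith
qed

lemma psi_in: assumes "z \<in> target_carrier N" shows "gpsi N g z \<in> gplus_carrier"
proof -
  from assms have f1: "finite (fsupp (z \<circ> Inl))" and f2: "finite (fsupp (z \<circ> Inr))"
    and z0: "z (Inr 0) = 0" by (auto simp: target_iff)
  have "fsupp (gpsi N g z) \<subseteq> (\<lambda>q. N*q) ` fsupp (z \<circ> Inr) \<union> (\<lambda>(r,i). N*i - r) ` fsupp (z \<circ> Inl)"
  proof
    fix n assume a: "n \<in> fsupp (gpsi N g z)"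
    show "n \<in> (\<lambda>q. N*q) ` fsupp (z \<circ> Inr) \<union> (\<lambda>(r,i). N*i - r) ` fsupp (z \<circ> Inl)"
    proof (cases "N dvd n")
      case True
      then have "n = N * (n div N)" by simp
      moreover have "n div N \<in> fsupp (z \<circ> Inr)" using a True by (auto simp: fsupp_def gpsi_def)
      ultimately show ?thesis by blast
    next
      case False
      have "(N - n mod N, n div N + 1) \<in> fsupp (z \<circ> Inl)" using a False by (auto simp: fsupp_def gpsi_def)
      moreover have "n = (\<lambda>(r,i). N*i - r) (N - n mod N, n div N + 1)" using nd_lemma[OF False] by simp
      ultimately show ?thesis by blast
    qed
  qed
  then have "finite (fsupp (gpsi N g z))" using f1 f2 by (meson finite_UnI finite_imageI finite_subset)
  moreover have "gpsi N g z 0 = 0" using z0 by (simp add: gpsi_def)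
  ultimately show ?thesis unfolding gplus_carrier_def vec_pos_iff by simp
qed

lemma psi_phi: assumes "x \<in> gplus_carrier" shows "gpsi N g (gphi N g x) = x"
proof
  fix n
  from assms have x0: "x 0 = 0" unfolding gplus_carrier_def vec_pos_iff by auto
  show "gpsi N g (gphi N g x) n = x n"
  proof (cases "N dvd n")
    case True
    then obtain q where q: "n = N * q" by blast
    show ?thesis
    proof (cases "q = 0")
      case True then show ?thesis using q x0 N by (simp add: gpsi_def gphi_def)
    next
      case False
      then have "g q \<noteq> 0" using gnz by simp
      moreover have "N \<noteq> 0" using N by simp
      ultimately show ?thesis using q by (simp add: gpsi_def gphi_def)
    qed
  next
    case False
    note nd = nd_lemma[OF False]
    show ?thesis using False nd by (simp add: gpsi_def gphi_def)
  qed
qed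

lemma phi_psi: assumes "z \<in> target_carrier N" shows "gphi N g (gpsi N g z) = z"
proof
  fix t
  from assms have z0: "z (Inr 0) = 0"
    and zl: "\<And>r i. \<not> (1 \<le> r \<and> r \<le> N - 1 \<and> 1 \<le> i) \<Longrightarrow> z (Inl (r, i)) = 0"
    by (auto simp: target_iff)
  show "gphi N g (gpsi N g z) t = z t"
  proof (cases t)
    case (Inr q)
    show ?thesis
    proof (cases "q = 0")
      case True then show ?thesis using Inr z0 N by (simp add: gpsi_def gphi_def)
    next
      case False
      then have "g q \<noteq> 0" using gnz by simp
      moreover have "N \<noteq> 0" using N by simp
      ultimately show ?thesis using Inr by (simp add: gpsi_def gphi_def)
    qed
  next
    case (Inl ri)
    obtain r i where ri: "ri = (r, i)" by force
    show ?thesis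
    proof (cases "1 \<le> r \<and> r \<le> N - 1 \<and> 1 \<le> i")
      case True
      then have "r < N" using N by linarith
      note d = dm_lemma[OF _ this, of i]
      have nd: "\<not> N dvd (N*i - r)" using d True \<open>r < N\<close> by (simp add: dvd_eq_mod_eq_0)
      show ?thesis using True d nd \<open>r < N\<close> by (simp add: Inl ri gpsi_def gphi_def)
    next
      case False
      then show ?thesis using zl by (auto simp: Inl ri gphi_def)
    qed
  qed
qed

lemma phi_bij: "bij_betw (gphi N g) gplus_carrier (target_carrier N)"
  by (rule bij_betw_byWitness[where f'="gpsi N g"]) (auto simp: psi_phi phi_psi phi_in psi_in)

lemma phi_add: "gphi N g (\<lambda>i. x i + y i) = (\<lambda>j. gphi N g x j + gphi N g y j)"
  by (auto simp: gphi_def algebra_simps split: sum.splits prod.splits)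

lemma phi_smult: "gphi N g (\<lambda>i. c * x i) = (\<lambda>j. c * gphi N g x j)"
  by (auto simp: gphi_def algebra_simps split: sum.splits prod.splits)

context
  fixes c :: "nat \<Rightarrow> nat \<Rightarrow> 'k"
  assumes cdef: "\<And>i j. j \<ge> 1 \<Longrightarrow> c i j = (if N dvd j then of_nat i * g (j div N) else 0)"
    and gid: "\<And>q q'. q \<ge> 1 \<Longrightarrow> q' \<ge> 1 \<Longrightarrow>
      (of_nat q * g q' - of_nat q' * g q) * g (q + q') = (of_nat q - of_nat q') * g q * g q'"
begin

lemma br_inr:
  assumes xA: "x \<in> gplus_carrier" and yA: "y \<in> gplus_carrier"
  shows "gphi N g (commutator (bil c (\<lambda>i j. i + j)) x y) (Inr p) =
         target_bracket N (gphi N g x) (gphi N g y) (Inr p)"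
proof -
  from xA have fx: "finite (fsupp x)" and x0: "x 0 = 0" unfolding gplus_carrier_def vec_pos_iff by auto
  from yA have fy: "finite (fsupp y)" and y0: "y 0 = 0" unfolding gplus_carrier_def vec_pos_iff by auto
  have tx: "finite (fsupp (gphi N g x \<circ> Inr))" using phi_in[OF xA] by (simp add: target_iff)
  have ty: "finite (fsupp (gphi N g y \<circ> Inr))" using phi_in[OF yA] by (simp add: target_iff)
  define T where "T i = x i * y (N*p - i) * (c i (N*p - i) - c (N*p - i) i)" for i
  have "gphi N g (commutator (bil c (\<lambda>i j. i + j)) x y) (Inr p) = (\<Sum>i\<le>N*p. T i) * (of_nat N * g p)"
    by (simp add: gphi_def comm_conv[OF fx fy] T_def)
  also have "(\<Sum>i\<le>N*p. T i) = (\<Sum>i\<le>N*p. if N dvd i then T i else 0)"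
  proof (rule sum.cong)
    fix i assume "i \<in> {..N*p}"
    then have ile: "i \<le> N*p" by simp
    show "T i = (if N dvd i then T i else 0)"
    proof (cases "N dvd i \<or> x i = 0 \<or> y (N*p - i) = 0")
      case True then show ?thesis by (auto simp: T_def)
    next
      case False
      then have i1: "i \<ge> 1" and j1: "N*p - i \<ge> 1" and nd: "\<not> N dvd i" using x0 y0
        by (auto simp: not_less_eq_eq[symmetric] Suc_le_eq) (metis gr_zeroI diff_is_0_eq ile le_antisym)
      have nd2: "\<not> N dvd (N*p - i)"
      proof
        assume "N dvd (N*p - i)"
        then have "N dvd (N*p - (N*p - i))" by (simp add: dvd_diff_nat)
        then show False using nd ile by simp
      qed
      show ?thesis using cdef[OF j1, of i] cdef[OF i1, of "N*p - i"] nd nd2 by (simp add: T_def)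
    qed
  qed simp
  also have "\<dots> = (\<Sum>q\<le>p. if N*q \<le> N*p then T (N*q) else 0)"
    by (rule sum_multiples) (use N in auto)
  also have "\<dots> = (\<Sum>q\<le>p. T (N*q))" by (rule sum.cong) auto
  finally have L: "gphi N g (commutator (bil c (\<lambda>i j. i + j)) x y) (Inr p) =
      (\<Sum>q\<le>p. T (N*q) * (of_nat N * g p))" by (simp add: sum_distrib_right)
  have R: "target_bracket N (gphi N g x) (gphi N g y) (Inr p) =
     (\<Sum>q\<le>p. x (N*q) * (of_nat N * g q) * (y (N*(p-q)) * (of_nat N * g (p-q))) * (of_nat q - of_nat (p - q)))"
    unfolding tb_inr[OF tx ty] by (simp add: gphi_def)
  show ?thesis unfolding L R
  proof (rule sum.cong)
    fix q assume "q \<in> {..p}"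
    then have qp: "q \<le> p" by simp
    show "T (N*q) * (of_nat N * g p) =
      x (N*q) * (of_nat N * g q) * (y (N*(p-q)) * (of_nat N * g (p-q))) * (of_nat q - of_nat (p - q))"
    proof (cases "q = 0 \<or> q = p")
      case True then show ?thesis using x0 y0 by (auto simp: T_def)
    next
      case False
      then have q1: "q \<ge> 1" and q2: "p - q \<ge> 1" using qp by auto
      have e1: "N*p - N*q = N*(p-q)" by (simp add: diff_mult_distrib2)
      have Nq1: "N*q \<ge> 1" and Nq2: "N*(p-q) \<ge> 1" using N q1 q2 by (auto simp: Suc_le_eq)
      have c1: "c (N*q) (N*(p-q)) = of_nat N * of_nat q * g (p-q)" using cdef[OF Nq2, of "N*q"] N by simp
      have c2: "c (N*(p-q)) (N*q) = of_nat N * of_nat (p-q) * g q" using cdef[OF Nq1, of "N*(p-q)"] N by simp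
      have G: "(of_nat q * g (p-q) - of_nat (p-q) * g q) * g p = (of_nat q - of_nat (p-q)) * g q * g (p-q)"
        using gid[OF q1 q2] qp by simp
      have "T (N*q) * (of_nat N * g p) = x (N*q) * y (N*(p-q)) * of_nat N * of_nat N *
              ((of_nat q * g (p-q) - of_nat (p-q) * g q) * g p)"
        unfolding T_def e1 c1 c2 by (simp only: algebra_simps)
      also have "\<dots> = x (N*q) * y (N*(p-q)) * of_nat N * of_nat N *
              ((of_nat q - of_nat (p-q)) * g q * g (p-q))" by (simp only: G)
      finally show ?thesis by (simp add: ac_simps)
    qed
  qed simp
qed

lemma br_inl:
  assumes xA: "x \<in> gplus_carrier" and yA: "y \<in> gplus_carrier"
  shows "gphi N g (commutator (bil c (\<lambda>i j. i + j)) x y) (Inl (r, k)) =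
         target_bracket N (gphi N g x) (gphi N g y) (Inl (r, k))"
proof -
  from xA have fx: "finite (fsupp x)" and x0: "x 0 = 0" unfolding gplus_carrier_def vec_pos_iff by auto
  from yA have fy: "finite (fsupp y)" and y0: "y 0 = 0" unfolding gplus_carrier_def vec_pos_iff by auto
  from phi_in[OF xA] have tx1: "finite (fsupp (gphi N g x \<circ> Inl))" and tx2: "finite (fsupp (gphi N g x \<circ> Inr))"
    by (simp_all add: target_iff)
  from phi_in[OF yA] have ty1: "finite (fsupp (gphi N g y \<circ> Inl))" and ty2: "finite (fsupp (gphi N g y \<circ> Inr))"
    by (simp_all add: target_iff)
  define \<alpha> where "\<alpha> i = (of_nat i + - (of_nat r / of_nat N) :: 'k)" for i
  define px where "px = gphi N g x"
  define py where "py = gphi N g y"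
  have R0: "target_bracket N (gphi N g x) (gphi N g y) (Inl (r, k)) =
     (\<Sum>i\<le>k. (px (Inl (r, i)) * py (Inr (k - i)) - py (Inl (r, i)) * px (Inr (k - i))) * \<alpha> i)"
    unfolding tb_inl[OF tx1 ty1 tx2 ty2] px_def py_def \<alpha>_def
    by (simp add: sum_subtractf[symmetric] algebra_simps)
  show ?thesis
  proof (cases "1 \<le> r \<and> r \<le> N - 1 \<and> 1 \<le> k")
    case False
    then have "\<forall>i\<le>k. \<not> (1 \<le> r \<and> r \<le> N - 1 \<and> 1 \<le> i)" by auto
    then have "(\<Sum>i\<le>k. (px (Inl (r, i)) * py (Inr (k - i)) - py (Inl (r, i)) * px (Inr (k - i))) * \<alpha> i) = 0"
      by (intro sum.neutral) (auto simp: px_def py_def gphi_def)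
    moreover have "gphi N g (commutator (bil c (\<lambda>i j. i + j)) x y) (Inl (r, k)) = 0"
      unfolding gphi_def sum.case prod.case if_not_P[OF False] by (rule refl)
    ultimately show ?thesis unfolding R0 by simp
  next
    case True
    then have r1: "1 \<le> r" and rN: "r < N" and k1: "1 \<le> k" using N by auto
    note dm = dm_lemma[OF r1 rN k1]
    define n where "n = N*k - r"
    have nnd: "\<not> N dvd n" using dm rN r1 by (simp add: n_def dvd_eq_mod_eq_0)
    have nle: "n \<le> N*k" by (simp add: n_def)
    define T where "T i = x i * y (n - i) * (c i (n - i) - c (n - i) i)" for i
    define A where "A i = (if N dvd i then - (x i * y (n - i) * c (n - i) i) else 0)" for i
    define B where "B i = (if N dvd (n - i) then x i * y (n - i) * c i (n - i) else 0)" for i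
    define W where "W i = x (n - i) * y i * c (n - i) i - x i * y (n - i) * c (n - i) i" for i
    have L0: "gphi N g (commutator (bil c (\<lambda>i j. i + j)) x y) (Inl (r, k)) = (\<Sum>i\<le>n. T i)"
      using True by (simp add: gphi_def comm_conv[OF fx fy] T_def n_def)
    have TAB: "T i = A i + B i" if ile: "i \<le> n" for i
    proof (cases "x i = 0 \<or> y (n - i) = 0")
      case True then show ?thesis by (auto simp: T_def A_def B_def)
    next
      case False
      have i1: "i \<ge> 1"
      proof (rule ccontr)
        assume "\<not> i \<ge> 1" then have "i = 0" by simp
        with False x0 show False by simp
      qed
      have j1: "n - i \<ge> 1"
      proof (rule ccontr)
        assume "\<not> n - i \<ge> 1" then have "n - i = 0" by simp
        with False y0 show False by simp
      qed
      have nb: "\<not> (N dvd i \<and> N dvd (n - i))"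
      proof
        assume "N dvd i \<and> N dvd (n - i)"
        then have "N dvd (i + (n - i))" by auto
        then show False using nnd ile by simp
      qed
      show ?thesis using cdef[OF j1, of i] cdef[OF i1, of "n - i"] nb
        by (auto simp: T_def A_def B_def)
    qed
    have "(\<Sum>i\<le>n. B i) = (\<Sum>i\<le>n. B (n - i))" by (rule sum_rev_atMost[symmetric])
    also have "\<dots> = (\<Sum>i\<le>n. if N dvd i then x (n - i) * y i * c (n - i) i else 0)"
      by (rule sum.cong) (auto simp: B_def)
    finally have SB: "(\<Sum>i\<le>n. B i) = \<dots>" .
    have "(\<Sum>i\<le>n. T i) = (\<Sum>i\<le>n. A i) + (\<Sum>i\<le>n. B i)"
      by (simp add: TAB sum.distrib)
    also have "\<dots> = (\<Sum>i\<le>n. if N dvd i then W i else 0)"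
      unfolding SB A_def W_def sum.distrib[symmetric] by (rule sum.cong) auto
    also have "\<dots> = (\<Sum>q\<le>k. if N*q \<le> n then W (N*q) else 0)"
      by (rule sum_multiples[OF N nle])
    finally have L: "gphi N g (commutator (bil c (\<lambda>i j. i + j)) x y) (Inl (r, k)) =
       (\<Sum>q\<le>k. if N*q \<le> n then W (N*q) else 0)" using L0 by simp
    have "target_bracket N (gphi N g x) (gphi N g y) (Inl (r, k)) =
       (\<Sum>q\<le>k. (px (Inl (r, k - q)) * py (Inr (k - (k - q))) - py (Inl (r, k - q)) * px (Inr (k - (k - q)))) * \<alpha> (k - q))"
      unfolding R0 by (rule sum_rev_atMost[symmetric])
    also have "\<dots> = (\<Sum>q\<le>k. (px (Inl (r, k - q)) * py (Inr q) - py (Inl (r, k - q)) * px (Inr q)) * \<alpha> (k - q))"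
      by (rule sum.cong) auto
    finally have R: "target_bracket N (gphi N g x) (gphi N g y) (Inl (r, k)) = \<dots>" .
    show ?thesis unfolding L R
    proof (rule sum.cong)
      fix q assume "q \<in> {..k}"
      then have qk: "q \<le> k" by simp
      show "(if N*q \<le> n then W (N*q) else 0) =
        (px (Inl (r, k - q)) * py (Inr q) - py (Inl (r, k - q)) * px (Inr q)) * \<alpha> (k - q)"
      proof (cases "q = 0")
        case True then show ?thesis using x0 y0 by (simp add: W_def px_def py_def gphi_def)
      next
        case q0: False
        show ?thesis
        proof (cases "q = k")
          case True
          have "N*k \<ge> N" using k1 by simp
          then have "N*k - r < N*k" using rN r1 by arith
          then have "\<not> N*q \<le> n" using True by (simp add: n_def)
          then show ?thesis using True by (simp add: px_def py_def gphi_def)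
        next
          case False
          then have q1: "1 \<le> q" and kq1: "1 \<le> k - q" using q0 qk by auto
          have "N*(q+1) \<le> N*k" using q0 False qk by (intro mult_le_mono2) simp
          then have Nqk: "N*q + N \<le> N*k" by simp
          have Nq: "N*q \<le> n" using Nqk rN by (simp add: n_def)
          define m where "m = N*(k-q) - r"
          have ekq: "N*(k-q) = N*k - N*q" by (simp add: diff_mult_distrib2)
          have nq: "n - N*q = m" unfolding m_def n_def ekq using Nqk rN by linarith
          have m1: "r \<le> N*(k-q)" using Nqk rN ekq by linarith
          have Nq1: "N*q \<ge> 1" using N q1 by (simp add: Suc_le_eq)
          have cm: "c m (N*q) = of_nat m * g q" using cdef[OF Nq1, of m] N by simp
          have Ea: "(of_nat m :: 'k) = of_nat N * \<alpha> (k - q)"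
            unfolding m_def \<alpha>_def using m1 N by (simp add: of_nat_diff field_simps)
          have pxl: "px (Inl (r, k - q)) = x m" and pyl: "py (Inl (r, k - q)) = y m"
            using True kq1 by (simp_all add: px_def py_def gphi_def m_def)
          have pxr: "px (Inr q) = x (N*q) * (of_nat N * g q)" and pyr: "py (Inr q) = y (N*q) * (of_nat N * g q)"
            by (simp_all add: px_def py_def gphi_def)
          show ?thesis unfolding pxl pyl pxr pyr using Nq
            by (simp add: W_def nq cm Ea algebra_simps)
        qed
      qed
    qed simp
  qed
qed


lemma generic_iso:
  "lie_isomorphic gplus_carrier (commutator (bil c (\<lambda>i j. i + j))) (target_carrier N) (target_bracket N)"
proof -
  have br: "gphi N g (commutator (bil c (\<lambda>i j. i + j)) x y) = target_bracket N (gphi N g x) (gphi N g y)"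
    if "x \<in> gplus_carrier" "y \<in> gplus_carrier" for x y
  proof
    fix t show "gphi N g (commutator (bil c (\<lambda>i j. i + j)) x y) t = target_bracket N (gphi N g x) (gphi N g y) t"
    proof (cases t)
      case (Inl ri)
      obtain r k where "ri = (r, k)" by force
      then show ?thesis using br_inl[OF that] Inl by simp
    next
      case (Inr p) then show ?thesis using br_inr[OF that] by simp
    qed
  qed
  show ?thesis unfolding lie_isomorphic_def lie_iso_def
    by (rule exI[of _ "gphi N g"]) (auto simp: phi_bij phi_add phi_smult br)
qed

end

end

lemma fdb_identity:
  fixes X Y a b :: "'k::field"
  assumes u: "X + b \<noteq> 0" and v: "Y + b \<noteq> 0" and w: "X + Y + b \<noteq> 0"
  shows "(X * (a / (Y + b)) - Y * (a / (X + b))) * (a / (X + Y + b)) = (X - Y) * (a / (X + b)) * (a / (Y + b))"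
proof -
  have e1: "X * (a / (Y + b)) - Y * (a / (X + b)) = a * (X - Y) * (X + Y + b) / ((X + b) * (Y + b))"
    using u v by (simp add: field_simps)
  have "(a * (X - Y) * (X + Y + b) / ((X + b) * (Y + b))) * (a / (X + Y + b))
      = ((a * (X - Y) * a) * (X + Y + b)) / (((X + b) * (Y + b)) * (X + Y + b))"
    unfolding times_divide_times_eq by (simp only: mult_ac)
  also have "\<dots> = (a * (X - Y) * a) / ((X + b) * (Y + b))"
    by (rule nonzero_mult_divide_mult_cancel_right[OF w])
  also have "\<dots> = (X - Y) * (a / (X + b)) * (a / (Y + b))" by (simp add: field_simps)
  finally show ?thesis unfolding e1 .
qed

theorem mainTheorem15:
  fixes N :: nat and lam lam' mu a b :: "'k::field_char_0"
  assumes "N \<ge> 1" and "mu \<noteq> 0" and "a \<noteq> 0"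
    and "\<forall>n::nat. n \<ge> 1 \<longrightarrow> b \<noteq> - of_nat n"
  shows "lie_isomorphic (gplus_carrier :: (nat \<Rightarrow> 'k) set) (commutator (preLie1 N lam a b))
           (target_carrier N) (target_bracket N)
       \<and> lie_isomorphic (gplus_carrier :: (nat \<Rightarrow> 'k) set) (commutator (preLie3 N lam' mu))
           (target_carrier N) (target_bracket N)"
proof
  have N0: "N \<noteq> 0" using assms(1) by simp
  have bq: "of_nat q + b \<noteq> 0" if "q \<ge> 1" for q
  proof
    assume "of_nat q + b = 0"
    then have "b = - of_nat q" by (simp add: eq_neg_iff_add_eq_0 add.commute)
    with assms(4) that show False by blast
  qed
  show "lie_isomorphic (gplus_carrier :: (nat \<Rightarrow> 'k) set) (commutator (preLie1 N lam a b))
           (target_carrier N) (target_bracket N)"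
    unfolding preLie1_def
  proof (rule generic_iso[where N=N and g="\<lambda>q. a / (of_nat q + b)"])
    show "N \<ge> 1" by (rule assms(1))
    show "a / (of_nat q + b) \<noteq> 0" if "q \<ge> 1" for q using bq[OF that] assms(3) by simp
    show "(if j = 0 then of_nat i * lam
            else if N dvd j then a * of_nat i / (of_nat j / of_nat N + b)
            else 0) = (if N dvd j then of_nat i * (a / (of_nat (j div N) + b)) else 0)"
      if "j \<ge> 1" for i j
    proof (cases "N dvd j")
      case True
      then obtain m where m: "j = N * m" by blast
      have "(of_nat j / of_nat N :: 'k) = of_nat m" using N0 by (simp add: m)
      then show ?thesis using that True N0 m by simp
    qed (use that in simp)
    show "(of_nat q * (a / (of_nat q' + b)) - of_nat q' * (a / (of_nat q + b))) * (a / (of_nat (q + q') + b))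
        = (of_nat q - of_nat q') * (a / (of_nat q + b)) * (a / (of_nat q' + b))"
      if "q \<ge> 1" "q' \<ge> 1" for q q'
    proof -
      have h1: "of_nat q + b \<noteq> 0" by (rule bq[OF that(1)])
      have h2: "of_nat q' + b \<noteq> 0" by (rule bq[OF that(2)])
      have h3': "of_nat q + of_nat q' + b \<noteq> 0" using bq[of "q + q'"] that by simp
      show ?thesis using fdb_identity[OF h1 h2 h3', of a] by simp
    qed
  qed
  show "lie_isomorphic (gplus_carrier :: (nat \<Rightarrow> 'k) set) (commutator (preLie3 N lam' mu))
           (target_carrier N) (target_bracket N)"
    unfolding preLie3_def
  proof (rule generic_iso[where N=N and g="\<lambda>q. mu"])
    show "N \<ge> 1" by (rule assms(1))
    show "mu \<noteq> 0" by (rule assms(2))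
    show "(if j = 0 then of_nat i * lam' else if N dvd j then of_nat i * mu else 0)
        = (if N dvd j then of_nat i * mu else 0)" if "j \<ge> 1" for i j using that by simp
    show "(of_nat q * mu - of_nat q' * mu) * mu = (of_nat q - of_nat q') * mu * mu" for q q'
      by (simp add: algebra_simps)
  qed
qed

end
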